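(* Let $Q$ be a good quantifier of type $\langle k\rangle$ on $\mathbb{N}$. Then for every $n$ and every $a\in\mathbb{N}^n$, the orbit $\{g(a):g\in\mathrm{Aut}(Q)\}$ is definable in $\mathscr{L}_{\omega\omega}(Q)$.
   Context: A quantifier of type $\langle k\rangle$ on $\mathbb{N}$ is a set $Q\subseteq 2^{\mathbb{N}^k}$ (a family of subsets of $\mathbb{N}^k$; $2^{\mathbb{N}^k}$ carries the product topology). $Q$ is downwards closed if it is closed under subsets. For a map $p$ and $A\subseteq\mathbb{N}^k$, $p(A)=\{(p(a_1),\dots,p(a_k)):(a_1,\dots,a_k)\in A\}$. For $Q$ closed and downwards closed, a function $p:n\to\mathbb{N}$ (where $n=\{0,\dots,n-1\}$) is compatible with $Q$ if for every $A\subseteq n^k$, $A\in Q\iff p(A)\in Q$. A permutation $f$ of $\mathbb{N}$ fixes (leaves invariant) $Q$ if $A\in Q\iff f(A)\in Q$ for all $A\subseteq\mathbb{N}^k$; $\mathrm{Aut}(Q)$ is the group of such permutations, acting on tuples coordinatewise. $Q$ is good if it is closed, downwards closed, and every finite injection $p:n\to\mathbb{N}$ compatible with $Q$ extends to a permutation of $\mathbb{N}$ fixing $Q$. $\mathscr{L}_{\omega\omega}(Q)$ is first-order logic extended by formulas $Qx\,\varphi(x,y)$ ($x$ a $k$-tuple of variables) with $\mathbb{N}\models Qx\,\varphi(x,b)$ iff $\{a\in\mathbb{N}^k:\mathbb{N}\models\varphi(a,b)\}\in Q$. A set $B\subseteq\mathbb{N}^n$ is definable in $\mathscr{L}_{\omega\omega}(Q)$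 if there is a formula $\varphi(x_1,\dots,x_n)$ whose only non-logical symbol is $Q$ such that $b\in B\iff\mathbb{N}\models\varphi(b)$. *)

theory Defs
  imports Main
begin

definition tuples :: "nat \<Rightarrow> nat list set" where
  "tuples k = {xs. length xs = k}"

definition tuples_below :: "nat \<Rightarrow> nat \<Rightarrow> nat list set" where
  "tuples_below n k = {xs. length xs = k \<and> (\<forall>x\<in>set xs. x < n)}"

definition is_quantifier :: "nat \<Rightarrow> nat list set set \<Rightarrow> bool" where
  "is_quantifier k Q \<longleftrightarrow> Q \<subseteq> Pow (tuples k)"

text \<open>Closedness in the product topology on 2^(N^k) (unfolded: A lies in the closure
  iff every basic neighbourhood, determined by a finite F, meets Q).\<close>
definition quant_closed :: "nat \<Rightarrow> nat list set set \<Rightarrow> bool" where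
  "quant_closed k Q \<longleftrightarrow>
     (\<forall>A. A \<subseteq> tuples k \<longrightarrow>
        (\<forall>F. F \<subseteq> tuples k \<and> finite F \<longrightarrow> (\<exists>B\<in>Q. A \<inter> F = B \<inter> F)) \<longrightarrow> A \<in> Q)"

definition down_closed :: "nat list set set \<Rightarrow> bool" where
  "down_closed Q \<longleftrightarrow> (\<forall>A B. A \<in> Q \<and> B \<subseteq> A \<longrightarrow> B \<in> Q)"

text \<open>p : n \<rightarrow> N compatible with Q (only the values of p on {0..<n} matter).\<close>
definition compatible :: "nat \<Rightarrow> nat list set set \<Rightarrow> nat \<Rightarrow> (nat \<Rightarrow> nat) \<Rightarrow> bool" where
  "compatible k Q n p \<longleftrightarrow>
     (\<forall>A. A \<subseteq> tuples_below n k \<longrightarrow> (A \<in> Q \<longleftrightarrow> map p ` A \<in> Q))"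

definition fixes_quant :: "nat \<Rightarrow> nat list set set \<Rightarrow> (nat \<Rightarrow> nat) \<Rightarrow> bool" where
  "fixes_quant k Q f \<longleftrightarrow> (\<forall>A. A \<subseteq> tuples k \<longrightarrow> (A \<in> Q \<longleftrightarrow> map f ` A \<in> Q))"

definition Aut :: "nat \<Rightarrow> nat list set set \<Rightarrow> (nat \<Rightarrow> nat) set" where
  "Aut k Q = {f. bij f \<and> fixes_quant k Q f}"

definition good :: "nat \<Rightarrow> nat list set set \<Rightarrow> bool" where
  "good k Q \<longleftrightarrow> quant_closed k Q \<and> down_closed Q \<and>
     (\<forall>n p. inj_on p {..<n} \<and> compatible k Q n p \<longrightarrow>
        (\<exists>f\<in>Aut k Q. \<forall>i<n. f i = p i))"

definition orbit :: "nat \<Rightarrow> nat list set set \<Rightarrow> nat list \<Rightarrow> nat list set" where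
  "orbit k Q a = {map g a | g. g \<in> Aut k Q}"

datatype fm =
    Eq nat nat
  | Neg fm
  | Conj fm fm
  | Ex nat fm
  | QAp "nat list" fm

fun wf_fm :: "nat \<Rightarrow> fm \<Rightarrow> bool" where
  "wf_fm k (Eq x y) = True"
| "wf_fm k (Neg \<phi>) = wf_fm k \<phi>"
| "wf_fm k (Conj \<phi> \<psi>) = (wf_fm k \<phi> \<and> wf_fm k \<psi>)"
| "wf_fm k (Ex x \<phi>) = wf_fm k \<phi>"
| "wf_fm k (QAp xs \<phi>) = (length xs = k \<and> distinct xs \<and> wf_fm k \<phi>)"

fun fv :: "fm \<Rightarrow> nat set" where
  "fv (Eq x y) = {x, y}"
| "fv (Neg \<phi>) = fv \<phi>"
| "fv (Conj \<phi> \<psi>) = fv \<phi> \<union> fv \<psi>"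
| "fv (Ex x \<phi>) = fv \<phi> - {x}"
| "fv (QAp xs \<phi>) = fv \<phi> - set xs"

fun upds :: "(nat \<Rightarrow> nat) \<Rightarrow> nat list \<Rightarrow> nat list \<Rightarrow> (nat \<Rightarrow> nat)" where
  "upds e (x # xs) (a # as) = (upds e xs as)(x := a)"
| "upds e _ _ = e"

fun sat :: "nat list set set \<Rightarrow> (nat \<Rightarrow> nat) \<Rightarrow> fm \<Rightarrow> bool" where
  "sat Q e (Eq x y) = (e x = e y)"
| "sat Q e (Neg \<phi>) = (\<not> sat Q e \<phi>)"
| "sat Q e (Conj \<phi> \<psi>) = (sat Q e \<phi> \<and> sat Q e \<psi>)"
| "sat Q e (Ex x \<phi>) = (\<exists>a. sat Q (e(x := a)) \<phi>)"
| "sat Q e (QAp xs \<phi>) = ({a. length a = length xs \<and> sat Q (upds e xs a) \<phi>} \<in> Q)"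

text \<open>B \<subseteq> N^n is definable in L_{\<omega>\<omega>}(Q): some formula with free variables among
  0..n-1 (playing x_1..x_n) defines it.\<close>
definition definable :: "nat \<Rightarrow> nat list set set \<Rightarrow> nat \<Rightarrow> nat list set \<Rightarrow> bool" where
  "definable k Q n B \<longleftrightarrow>
     (\<exists>\<phi>. wf_fm k \<phi> \<and> fv \<phi> \<subseteq> {..<n} \<and>
        (\<forall>b. length b = n \<longrightarrow> (b \<in> B \<longleftrightarrow> sat Q (\<lambda>i. b ! i) \<phi>)))"

end

theory Submission
  imports Defs
begin

definition TT :: fm where "TT = Ex 0 (Eq 0 0)"

fun conjs :: "fm list \<Rightarrow> fm" where
  "conjs [] = TT"
| "conjs (\<phi> # \<phi>s) = Conj \<phi> (conjs \<phi>s)"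

fun disjs :: "fm list \<Rightarrow> fm" where
  "disjs [] = Neg TT"
| "disjs (\<phi> # \<phi>s) = Neg (Conj (Neg \<phi>) (Neg (disjs \<phi>s)))"

fun exs :: "nat list \<Rightarrow> fm \<Rightarrow> fm" where
  "exs [] \<phi> = \<phi>"
| "exs (v # vs) \<phi> = Ex v (exs vs \<phi>)"

lemma sat_TT[simp]: "sat Q e TT" by (simp add: TT_def)
lemma fv_TT[simp]: "fv TT = {}" by (simp add: TT_def)
lemma wf_TT[simp]: "wf_fm k TT" by (simp add: TT_def)

lemma sat_conjs[simp]: "sat Q e (conjs \<phi>s) \<longleftrightarrow> (\<forall>\<phi>\<in>set \<phi>s. sat Q e \<phi>)"
  by (induction \<phi>s) auto
lemma sat_disjs[simp]: "sat Q e (disjs \<phi>s) \<longleftrightarrow> (\<exists>\<phi>\<in>set \<phi>s. sat Q e \<phi>)"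
  by (induction \<phi>s) auto
lemma fv_conjs[simp]: "fv (conjs \<phi>s) = (\<Union>\<phi>\<in>set \<phi>s. fv \<phi>)"
  by (induction \<phi>s) auto
lemma fv_disjs[simp]: "fv (disjs \<phi>s) = (\<Union>\<phi>\<in>set \<phi>s. fv \<phi>)"
  by (induction \<phi>s) auto
lemma wf_conjs[simp]: "wf_fm k (conjs \<phi>s) \<longleftrightarrow> (\<forall>\<phi>\<in>set \<phi>s. wf_fm k \<phi>)"
  by (induction \<phi>s) auto
lemma wf_disjs[simp]: "wf_fm k (disjs \<phi>s) \<longleftrightarrow> (\<forall>\<phi>\<in>set \<phi>s. wf_fm k \<phi>)"
  by (induction \<phi>s) auto
lemma fv_exs[simp]: "fv (exs vs \<phi>) = fv \<phi> - set vs"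
  by (induction vs) auto
lemma wf_exs[simp]: "wf_fm k (exs vs \<phi>) = wf_fm k \<phi>"
  by (induction vs) auto

lemma sat_exs: "sat Q e (exs vs \<phi>) \<longleftrightarrow> (\<exists>e'. (\<forall>x. x \<notin> set vs \<longrightarrow> e' x = e x) \<and> sat Q e' \<phi>)"
proof (induction vs arbitrary: e)
  case Nil
  then show ?case by (auto intro!: exI[of _ e] simp: fun_eq_iff)
next
  case (Cons v vs)
  show ?case
  proof
    assume "sat Q e (exs (v # vs) \<phi>)"
    then obtain a where "sat Q (e(v:=a)) (exs vs \<phi>)" by auto
    then obtain e' where "\<forall>x. x \<notin> set vs \<longrightarrow> e' x = (e(v:=a)) x" "sat Q e' \<phi>"
      using Cons.IH by blast
    then show "\<exists>e'. (\<forall>x. x \<notin> set (v # vs) \<longrightarrow> e' x = e x) \<and> sat Q e' \<phi>"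
      by (intro exI[of _ e'] conjI) auto
  next
    assume "\<exists>e'. (\<forall>x. x \<notin> set (v # vs) \<longrightarrow> e' x = e x) \<and> sat Q e' \<phi>"
    then obtain e' where h: "\<forall>x. x \<notin> set (v # vs) \<longrightarrow> e' x = e x" "sat Q e' \<phi>" by blast
    have "\<forall>x. x \<notin> set vs \<longrightarrow> e' x = (e(v:=e' v)) x" using h(1) by auto
    then have "sat Q (e(v:=e' v)) (exs vs \<phi>)" using Cons.IH h(2) by blast
    then show "sat Q e (exs (v # vs) \<phi>)" by auto
  qed
qed

lemma upds_out: "x \<notin> set xs \<Longrightarrow> upds e xs c x = e x"
proof (induction xs arbitrary: c)
  case Nil then show ?case by simp
next
  case (Cons y ys) then show ?case by (cases c) auto
qed

lemma upds_in: "distinct xs \<Longrightarrow> length c = length xs \<Longrightarrow> j < length xs \<Longrightarrow> upds e xs c (xs ! j) = c ! j"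
proof (induction xs arbitrary: c j)
  case Nil then show ?case by simp
next
  case (Cons y ys)
  then obtain c0 cs where c: "c = c0 # cs" by (cases c) auto
  show ?case
  proof (cases j)
    case 0 then show ?thesis using c by simp
  next
    case (Suc j')
    then have "ys ! j' \<noteq> y" using Cons.prems by (auto simp: nth_mem)
    then show ?thesis using Cons c Suc by auto
  qed
qed


theorem proposition12:
  fixes k :: nat and Q :: "nat list set set"
  assumes "is_quantifier k Q" and "good k Q"
  shows "\<forall>n a. length a = n \<longrightarrow> definable k Q n (orbit k Q a)"
proof (intro allI impI)
  fix n :: nat and a :: "nat list" assume len: "length a = n"
  define M where "M = Suc (Max (insert 0 (set a)))"
  have aM: "\<forall>i<n. a!i < M"
  proof (intro allI impI)
    fix i assume "i < n"
    then have "a!i \<in> insert 0 (set a)" using len by (simp add: nth_mem)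
    then have "a!i \<le> Max (insert 0 (set a))" by simp
    then show "a!i < M" unfolding M_def by simp
  qed
  define T where "T = tuples_below M k"
  have finT: "finite T"
  proof -
    have "T \<subseteq> {xs. set xs \<subseteq> {..<M} \<and> length xs = k}"
      unfolding T_def tuples_below_def by auto
    then show ?thesis using finite_lists_length_eq[of "{..<M}" k] finite_subset by blast
  qed
  obtain Ls where Ls: "set Ls = Pow T" using finite_list finT by (meson finite_Pow_iff)
  define lst where "lst A = (SOME xs. set xs = A)" for A :: "nat list set"
  have lst: "set (lst A) = A" if "A \<subseteq> T" for A
  proof -
    have "finite A" using that finT finite_subset by blast
    then have "\<exists>xs. set xs = A" using finite_list by blast
    then show ?thesis unfolding lst_def by (rule someI_ex)
  qed
  define zs where "zs = [n+M..<n+M+k]"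
  define phiA where "phiA t = conjs (map (\<lambda>j. Eq (n+M+j) (n + t!j)) [0..<k])" for t :: "nat list"
  define psi where "psi A = QAp zs (disjs (map phiA (lst A)))" for A
  define qpart where "qpart = conjs (map (\<lambda>A. if A \<in> Q then psi A else Neg (psi A)) Ls)"
  define dpart where "dpart = conjs [Neg (Eq (n+i) (n+j)). i <- [0..<M], j <- [0..<M], i \<noteq> j]"
  define epart where "epart = conjs (map (\<lambda>i. Eq i (n + a!i)) [0..<n])"
  define \<phi> where "\<phi> = exs [n..<n+M] (Conj dpart (Conj qpart epart))"

  have psi_sem: "sat Q e' (psi A) \<longleftrightarrow> map (\<lambda>j. e' (n+j)) ` A \<in> Q" if AT: "A \<subseteq> T" for e' A
  proof -
    let ?p = "\<lambda>j. e' (n+j)"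
    have "{c. length c = length zs \<and> sat Q (upds e' zs c) (disjs (map phiA (lst A)))} = map ?p ` A"
    proof (intro set_eqI iffI)
      fix c assume "c \<in> {c. length c = length zs \<and> sat Q (upds e' zs c) (disjs (map phiA (lst A)))}"
      then have lc: "length c = k" and "\<exists>t\<in>A. sat Q (upds e' zs c) (phiA t)"
        using lst[OF AT] by (auto simp: zs_def)
      then obtain t where tA: "t \<in> A" and st: "sat Q (upds e' zs c) (phiA t)" by blast
      have tT: "length t = k" "\<forall>x\<in>set t. x < M" using tA AT unfolding T_def tuples_below_def by auto
      have "c = map ?p t"
      proof (rule nth_equalityI)
        show "length c = length (map ?p t)" using lc tT by simp
        fix j assume "j < length c"
        then have jk: "j < k" using lc by simp
        have "upds e' zs c (n+M+j) = upds e' zs c (n + t!j)"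
          using st jk unfolding phiA_def by simp
        moreover have "upds e' zs c (n+M+j) = c!j"
          using upds_in[of zs c j e'] jk lc unfolding zs_def by simp
        moreover have "t!j < M" using tT jk by (simp add: nth_mem)
        then have "upds e' zs c (n + t!j) = e' (n + t!j)"
          by (intro upds_out) (simp add: zs_def)
        ultimately show "c!j = map ?p t ! j" using jk tT by simp
      qed
      then show "c \<in> map ?p ` A" using tA by blast
    next
      fix c assume "c \<in> map ?p ` A"
      then obtain t where tA: "t \<in> A" and c: "c = map ?p t" by blast
      have tT: "length t = k" "\<forall>x\<in>set t. x < M" using tA AT unfolding T_def tuples_below_def by auto
      have lc: "length c = k" using c tT by simp
      have "\<forall>j<k. upds e' zs c (n+M+j) = upds e' zs c (n + t!j)"
      proof (intro allI impI)
        fix j assume jk: "j < k"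
        have "upds e' zs c (n+M+j) = c!j"
          using upds_in[of zs c j e'] jk lc unfolding zs_def by simp
        moreover have "t!j < M" using tT jk by (simp add: nth_mem)
        then have "upds e' zs c (n + t!j) = e' (n + t!j)"
          by (intro upds_out) (simp add: zs_def)
        ultimately show "upds e' zs c (n+M+j) = upds e' zs c (n + t!j)" using jk tT c by simp
      qed
      then have "sat Q (upds e' zs c) (phiA t)" unfolding phiA_def by auto
      then show "c \<in> {c. length c = length zs \<and> sat Q (upds e' zs c) (disjs (map phiA (lst A)))}"
        using lst[OF AT] tA lc by (auto simp: zs_def)
    qed
    then show ?thesis unfolding psi_def by simp
  qed

  have wf: "wf_fm k \<phi>"
    unfolding \<phi>_def dpart_def qpart_def epart_def psi_def phiA_def zs_def by auto
  have fvpsi: "fv (psi A) \<subseteq> {..<n+M}" if AT: "A \<subseteq> T" for A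
  proof -
    have eq: "fv (psi A) = (\<Union>t\<in>A. \<Union>j\<in>{0..<k}. {n+M+j, n+t!j}) - set zs"
      unfolding psi_def phiA_def using lst[OF AT] by simp
    have "t!j < M" if "t \<in> A" "j < k" for t j
      using that AT unfolding T_def tuples_below_def by (auto simp: nth_mem)
    then show ?thesis unfolding eq zs_def by auto
  qed
  have fvq: "fv qpart \<subseteq> {..<n+M}"
  proof -
    have ifv: "fv (if A \<in> Q then psi A else Neg (psi A)) = fv (psi A)" for A by simp
    have "fv qpart = (\<Union>A\<in>set Ls. fv (psi A))" unfolding qpart_def fv_conjs set_map image_comp
      by (rule SUP_cong[OF refl]) (simp only: comp_def ifv)
    also have "\<dots> \<subseteq> {..<n+M}" using fvpsi Ls by blast
    finally show ?thesis .
  qed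
  have fvd: "fv dpart \<subseteq> {..<n+M}" unfolding dpart_def by auto
  have fve: "fv epart \<subseteq> {..<n+M}" unfolding epart_def using aM by fastforce
  have fv: "fv \<phi> \<subseteq> {..<n}" unfolding \<phi>_def using fvq fvd fve by auto

  have sem: "b \<in> orbit k Q a \<longleftrightarrow> sat Q (\<lambda>i. b!i) \<phi>" if lb: "length b = n" for b
  proof -
    have "sat Q (\<lambda>i. b!i) \<phi> \<longleftrightarrow> (\<exists>e'. (\<forall>x. x \<notin> {n..<n+M} \<longrightarrow> e' x = b!x) \<and>
          inj_on (\<lambda>j. e' (n+j)) {..<M} \<and> compatible k Q M (\<lambda>j. e' (n+j)) \<and>
          (\<forall>i<n. b!i = e' (n + a!i)))"
    proof -
      have D0: "sat Q e' dpart \<longleftrightarrow> (\<forall>i<M. \<forall>j<M. i \<noteq> j \<longrightarrow> e' (n+i) \<noteq> e' (n+j))" for e'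
        unfolding dpart_def by auto
      have D: "sat Q e' dpart \<longleftrightarrow> inj_on (\<lambda>j. e' (n+j)) {..<M}" for e'
        unfolding D0 inj_on_def by blast
      have C: "sat Q e' qpart \<longleftrightarrow> compatible k Q M (\<lambda>j. e' (n+j))" for e'
      proof -
        have "sat Q e' qpart \<longleftrightarrow> (\<forall>A\<in>set Ls. sat Q e' (if A \<in> Q then psi A else Neg (psi A)))"
          unfolding qpart_def by (simp only: sat_conjs set_map ball_simps)
        also have "\<dots> \<longleftrightarrow> (\<forall>A. A \<subseteq> T \<longrightarrow> (A \<in> Q \<longleftrightarrow> map (\<lambda>j. e' (n+j)) ` A \<in> Q))"
          unfolding Ls by (auto simp: psi_sem)
        finally show ?thesis unfolding compatible_def T_def .
      qed
      have E: "(\<forall>x. x \<notin> {n..<n+M} \<longrightarrow> e' x = b!x) \<Longrightarrow>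
           sat Q e' epart \<longleftrightarrow> (\<forall>i<n. b!i = e' (n + a!i))" for e'
        unfolding epart_def by auto
      show ?thesis unfolding \<phi>_def sat_exs sat.simps set_upt D C using E by blast
    qed
    also have "\<dots> \<longleftrightarrow> b \<in> orbit k Q a"
    proof
      assume "\<exists>e'. (\<forall>x. x \<notin> {n..<n+M} \<longrightarrow> e' x = b!x) \<and>
          inj_on (\<lambda>j. e' (n+j)) {..<M} \<and> compatible k Q M (\<lambda>j. e' (n+j)) \<and>
          (\<forall>i<n. b!i = e' (n + a!i))"
      then obtain e' where h: "inj_on (\<lambda>j. e' (n+j)) {..<M}" "compatible k Q M (\<lambda>j. e' (n+j))"
          "\<forall>i<n. b!i = e' (n + a!i)" by blast
      then obtain f where f: "f \<in> Aut k Q" "\<forall>i<M. f i = e' (n+i)"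
        using assms(2) unfolding good_def by blast
      have "b = map f a"
        by (rule nth_equalityI) (use lb len h(3) f(2) aM in auto)
      then show "b \<in> orbit k Q a" unfolding orbit_def using f(1) by blast
    next
      assume "b \<in> orbit k Q a"
      then obtain g where g: "g \<in> Aut k Q" "b = map g a" unfolding orbit_def by blast
      define e' where "e' x = (if n \<le> x \<and> x < n+M then g (x-n) else b!x)" for x
      have p: "(\<lambda>j. e' (n+j)) j = g j" if "j < M" for j using that unfolding e'_def by simp
      have "inj_on (\<lambda>j. e' (n+j)) {..<M}"
        using g(1) p unfolding Aut_def inj_on_def bij_def inj_def by auto
      moreover have "compatible k Q M (\<lambda>j. e' (n+j))"
        unfolding compatible_def
      proof (intro allI impI)
        fix A assume AT: "A \<subseteq> tuples_below M k"
        have "map (\<lambda>j. e' (n+j)) ` A = map g ` A"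
        proof (rule image_cong[OF refl])
          fix t assume "t \<in> A"
          then have "\<forall>x\<in>set t. x < M" using AT unfolding tuples_below_def by auto
          then show "map (\<lambda>j. e' (n+j)) t = map g t" using p by auto
        qed
        moreover have "A \<subseteq> tuples k" using AT unfolding tuples_below_def tuples_def by auto
        ultimately show "A \<in> Q \<longleftrightarrow> map (\<lambda>j. e' (n+j)) ` A \<in> Q"
          using g(1) unfolding Aut_def fixes_quant_def by auto
      qed
      moreover have "\<forall>i<n. b!i = e' (n + a!i)" using g(2) p aM len by auto
      moreover have "\<forall>x. x \<notin> {n..<n+M} \<longrightarrow> e' x = b!x" unfolding e'_def by auto
      ultimately show "\<exists>e'. (\<forall>x. x \<notin> {n..<n+M} \<longrightarrow> e' x = b!x) \<and>
          inj_on (\<lambda>j. e' (n+j)) {..<M} \<and> compatible k Q M (\<lambda>j. e' (n+j)) \<and>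
          (\<forall>i<n. b!i = e' (n + a!i))" by blast
    qed
    finally show ?thesis by simp
  qed
  show "definable k Q n (orbit k Q a)"
    unfolding definable_def using wf fv sem by blast
qed

end
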